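(* Let $f\in S(\mathcal{P},\nu,\rho,d,C)$, let $(f_z)_{z\in Z}$ be fidelity approximations with cost-to-bias function $\Phi$, and run Kometo with budget $\Lambda\ge1$. Let $\Psi$ be a non-increasing function with $\Phi\le\Psi$, let $j$ be a non-negative integer and $\tilde h$ a positive real number such that (1) $\Psi(e^j)\le\nu\rho^{\tilde h}$ and (2) $\frac{\tilde\Lambda}{4\tilde h e^j}\ge C\rho^{-d\tilde h}$, where $\tilde\Lambda=\left\lfloor\frac{(e-1)\Lambda}{2Ke(\log\Lambda+1)^2}\right\rfloor$. Then the simple regret of Kometo satisfies $r_\Lambda\le\frac{3\nu}{\rho}\rho^{\tilde h}+2\Psi(\tilde\Lambda)$.
   Context: $\mathcal{X}$ has a hierarchical partitioning $\mathcal{P}=(\mathcal{P}_{h,i})_{h\ge0,0\le i\le K^h-1}$, $K\ge2$: $\mathcal{P}_{0,0}=\mathcal{X}$, the children $\mathcal{P}_{h+1,Ki+l}$ ($0\le l\le K-1$) of $\mathcal{P}_{h,i}$ partition it; each cell has a representative $x_{h,i}\in\mathcal{P}_{h,i}$. $\nu>0$, $\rho\in(0,1)$, $d\ge0$, $C>1$. $S(\mathcal{P},\nu,\rho,d,C)$: set of $f:\mathcal{X}\to\mathbb{R}$ such that for one global maximizer $x^\star$ and all $h$, each $x$ in the depth-$h$ cell containing $x^\star$ has $f(x)\ge f(x^\star)-\nu\rho^h$, and for every $h$ at most $C\rho^{-dh}$ depth-$h$ cells $\mathcal{P}_{h,i}$ satisfy $\sup_{\mathcal{P}_{h,i}}f\ge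 f(x^\star)-3\nu\rho^h$. Multi-fidelity: $Z=[0,1]$, $f_z:\mathcal{X}\to\mathbb{R}$, bias $\zeta:Z\to[0,+\infty]$ with strictly increasing $g_z$ and $\sup_x|f(x)-g_z(f_z(x))|\le\zeta(z)$, cost $\lambda$, and for each $c\ge1$ an available fidelity $z_c$ with $\lambda(z_c)\le c$; cost-to-bias function $\Phi(c)=\zeta(z_c)$ on $[1,\infty)$. Simple regret $r_\Lambda=\mathbb{E}[\max f-f(x_\Lambda)]$. Kometo ($\log$ natural): $j_{\max}=\lfloor\log\tilde\Lambda\rfloor$; level $j$ means fidelity $z_{e^j}$; flags $T_{h,i,j}\in\{0,1\}$ (initially 0) and values $f_{h,i,j}=f_{z_{e^j}}(x_{h,i})$ when $T_{h,i,j}=1$. Opening $\mathcal{P}_{h,i}$ at level $j$: for each child $\mathcal{P}_{h+1,i'}$ and $0\le u\le j$, set $T_{h+1,i',u}=1$ and evaluate $f_{h+1,i',u}$. Steps: open $\mathcal{P}_{0,0}$ with budget $\tilde\Lambda$ (level $j_{\max}$); for $h=1..\lfloor\tilde\Lambda\rfloor$, $m=1..\lfloor\tilde\Lambda/h\rfloor$, with $j=\lfloor\log\frac{\tilde\Lambda}{hm}\rfloor$, open at level $j$ the not-yet-opened depth-$h$ cell with $T_{h,i,j}=1$ and highest $f_{h,i,j}$; for $j=0..j_{\max}$ let $x^c_j$ be the representative of a cell maximizing $f_{h,i,j}$ over $T_{h,i,j}=1$ and evaluate $f_{z_{\tilde\Lambda}}(x^c_j)$; output $x_\Lambda=\arg\max_j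 f_{z_{\tilde\Lambda}}(x^c_j)$. *)

theory Defs
  imports "HOL-Analysis.Analysis" "HOL-Library.Extended_Real"
begin

text \<open>Cells are P h i (depth h, index i < K^h); children of P h i are
  P (h+1) (K*i+l), l < K; xr h i is the representative of P h i.\<close>

definition hier_partition ::
  "nat \<Rightarrow> (nat \<Rightarrow> nat \<Rightarrow> 'x set) \<Rightarrow> (nat \<Rightarrow> nat \<Rightarrow> 'x) \<Rightarrow> bool" where
  "hier_partition K P xr \<longleftrightarrow>
     K \<ge> 2 \<and> P 0 0 = UNIV \<and>
     (\<forall>h i. i < K ^ h \<longrightarrow>
        P h i = (\<Union>l<K. P (Suc h) (K * i + l)) \<and>
        (\<forall>l<K. \<forall>l'<K. l \<noteq> l' \<longrightarrow> P (Suc h) (K * i + l) \<inter> P (Suc h) (K * i + l') = {}) \<and>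
        xr h i \<in> P h i)"

definition in_S ::
  "nat \<Rightarrow> (nat \<Rightarrow> nat \<Rightarrow> 'x set) \<Rightarrow> real \<Rightarrow> real \<Rightarrow> real \<Rightarrow> real \<Rightarrow> ('x \<Rightarrow> real) \<Rightarrow> bool" where
  "in_S K P \<nu> \<rho> d C f \<longleftrightarrow>
     (\<exists>xs. (\<forall>x. f x \<le> f xs) \<and>
        (\<forall>h. \<forall>i<K ^ h. xs \<in> P h i \<longrightarrow> (\<forall>x\<in>P h i. f x \<ge> f xs - \<nu> * \<rho> ^ h)) \<and>
        (\<forall>h. real (card {i. i < K ^ h \<and> (SUP x\<in>P h i. f x) \<ge> f xs - 3 * \<nu> * \<rho> ^ h})
               \<le> C * \<rho> powr (- d * real h)))"

definition kval ::
  "(real \<Rightarrow> 'x \<Rightarrow> real) \<Rightarrow> (real \<Rightarrow> real) \<Rightarrow> (nat \<Rightarrow> nat \<Rightarrow> 'x) \<Rightarrow> nat \<Rightarrow> nat \<Rightarrow> nat \<Rightarrow> real" where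
  "kval fz zc xr h i u = fz (zc (exp (real u))) (xr h i)"

definition open_flags :: "nat \<Rightarrow> nat \<Rightarrow> nat \<Rightarrow> nat \<Rightarrow> (nat \<times> nat \<times> nat) set" where
  "open_flags K h i j = {(Suc h, K * i + l, u) | l u. l < K \<and> u \<le> j}"

text \<open>One iteration of the inner loop at depth h with level j, state (T, Op) where
  T is the set of triples with flag 1 and Op the set of opened cells.
  Ties are broken arbitrarily (nondeterministically); if no candidate exists, nothing happens.\<close>
definition kstep ::
  "nat \<Rightarrow> (real \<Rightarrow> 'x \<Rightarrow> real) \<Rightarrow> (real \<Rightarrow> real) \<Rightarrow> (nat \<Rightarrow> nat \<Rightarrow> 'x) \<Rightarrow> nat \<Rightarrow> nat \<Rightarrow>
   (nat \<times> nat \<times> nat) set \<Rightarrow> (nat \<times> nat) set \<Rightarrow> (nat \<times> nat \<times> nat) set \<Rightarrow> (nat \<times> nat) set \<Rightarrow> bool" where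
  "kstep K fz zc xr h j T Op T' Op' \<longleftrightarrow>
     (let Cand = {i. (h, i, j) \<in> T \<and> (h, i) \<notin> Op} in
       (Cand = {} \<and> T' = T \<and> Op' = Op) \<or>
       (\<exists>i\<in>Cand. (\<forall>i'\<in>Cand. kval fz zc xr h i' j \<le> kval fz zc xr h i j) \<and>
          T' = T \<union> open_flags K h i j \<and> Op' = insert (h, i) Op))"

inductive krun ::
  "nat \<Rightarrow> (real \<Rightarrow> 'x \<Rightarrow> real) \<Rightarrow> (real \<Rightarrow> real) \<Rightarrow> (nat \<Rightarrow> nat \<Rightarrow> 'x) \<Rightarrow> (nat \<times> nat) list \<Rightarrow>
   (nat \<times> nat \<times> nat) set \<Rightarrow> (nat \<times> nat) set \<Rightarrow> (nat \<times> nat \<times> nat) set \<Rightarrow> (nat \<times> nat) set \<Rightarrow> bool"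
  for K fz zc xr where
  krun_Nil: "krun K fz zc xr [] T Op T Op"
| krun_Cons: "kstep K fz zc xr h j T Op T1 Op1 \<Longrightarrow> krun K fz zc xr qs T1 Op1 T2 Op2 \<Longrightarrow>
              krun K fz zc xr ((h, j) # qs) T Op T2 Op2"

definition kschedule :: "nat \<Rightarrow> (nat \<times> nat) list" where
  "kschedule L = concat (map (\<lambda>h. map (\<lambda>m. (h, nat \<lfloor>ln (real L / real (h * m))\<rfloor>)) [1..<L div h + 1]) [1..<L + 1])"

definition lam_tilde :: "nat \<Rightarrow> real \<Rightarrow> nat" where
  "lam_tilde K \<Lambda> = nat \<lfloor>(exp 1 - 1) * \<Lambda> / (2 * real K * exp 1 * (ln \<Lambda> + 1)\<^sup>2)\<rfloor>"

definition jmax :: "nat \<Rightarrow> nat" where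
  "jmax L = nat \<lfloor>ln (real L)\<rfloor>"

text \<open>xout is a possible output of Kometo with budget \<Lambda> (for some tie-breaking).\<close>
definition kometo_output ::
  "nat \<Rightarrow> (real \<Rightarrow> 'x \<Rightarrow> real) \<Rightarrow> (real \<Rightarrow> real) \<Rightarrow> (nat \<Rightarrow> nat \<Rightarrow> 'x) \<Rightarrow> real \<Rightarrow> 'x \<Rightarrow> bool" where
  "kometo_output K fz zc xr \<Lambda> xout \<longleftrightarrow>
     (let L = lam_tilde K \<Lambda>; J = jmax L in
      \<exists>T Op ch ci j0.
        krun K fz zc xr (kschedule L) (open_flags K 0 0 J) {(0, 0)} T Op \<and>
        (\<forall>j\<le>J. (ch j, ci j, j) \<in> T \<and>
           (\<forall>h i. (h, i, j) \<in> T \<longrightarrow> kval fz zc xr h i j \<le> kval fz zc xr (ch j) (ci j) j)) \<and>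
        j0 \<le> J \<and>
        (\<forall>j\<le>J. fz (zc (real L)) (xr (ch j) (ci j)) \<le> fz (zc (real L)) (xr (ch j0) (ci j0))) \<and>
        xout = xr (ch j0) (ci j0))"

end

theory Submission
  imports Defs
begin


definition TB :: "nat \<Rightarrow> (nat \<times> nat \<times> nat) set \<Rightarrow> bool" where
  "TB K T \<longleftrightarrow> (\<forall>h i u. (h, i, u) \<in> T \<longrightarrow> i < K ^ h)"

lemma child_bound: "i < K ^ h \<Longrightarrow> l < (K::nat) \<Longrightarrow> K * i + l < K ^ Suc h"
proof -
  assume a: "i < K ^ h" "l < K"
  have "K * i + l < K * i + K" using a by simp
  also have "\<dots> = K * (i + 1)" by simp
  also have "\<dots> \<le> K * K ^ h" using a by (intro mult_le_mono2) simp
  finally show ?thesis by simp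
qed

lemma kstep_cases:
  assumes "kstep K fz zc xr h j T Op T' Op'"
  shows "(T' = T \<and> Op' = Op) \<or>
    (\<exists>i. (h, i, j) \<in> T \<and> (h, i) \<notin> Op \<and>
       (\<forall>i'. (h, i', j) \<in> T \<and> (h, i') \<notin> Op \<longrightarrow> kval fz zc xr h i' j \<le> kval fz zc xr h i j) \<and>
       T' = T \<union> open_flags K h i j \<and> Op' = insert (h, i) Op)"
  using assms unfolding kstep_def Let_def by auto

lemma kstep_nonempty:
  assumes "kstep K fz zc xr h j T Op T' Op'" "(h, i0, j) \<in> T" "(h, i0) \<notin> Op"
  shows "\<exists>i. (h, i, j) \<in> T \<and> (h, i) \<notin> Op \<and>
       kval fz zc xr h i0 j \<le> kval fz zc xr h i j \<and>
       T' = T \<union> open_flags K h i j \<and> Op' = insert (h, i) Op"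
  using assms unfolding kstep_def Let_def by auto

lemma kstep_TB: "kstep K fz zc xr h j T Op T' Op' \<Longrightarrow> TB K T \<Longrightarrow> TB K T'"
  apply (drule kstep_cases)
  apply (auto simp: TB_def open_flags_def intro!: child_bound)
  done

lemma krun_mono: "krun K fz zc xr xs T Op T' Op' \<Longrightarrow> T \<subseteq> T' \<and> Op \<subseteq> Op'"
proof (induction rule: krun.induct)
  case (krun_Nil T Op) then show ?case by simp
next
  case (krun_Cons h j T Op T1 Op1 qs T2 Op2)
  then show ?case using kstep_cases[OF krun_Cons(1)] by blast
qed

lemma krun_TB: "krun K fz zc xr xs T Op T' Op' \<Longrightarrow> TB K T \<Longrightarrow> TB K T'"
  by (induction rule: krun.induct) (auto dest: kstep_TB)

lemma krun_Op: "krun K fz zc xr xs T Op T' Op' \<Longrightarrow> Op' \<subseteq> Op \<union> {p. fst p \<in> fst ` set xs}"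
proof (induction rule: krun.induct)
  case (krun_Nil T Op) then show ?case by simp
next
  case (krun_Cons h j T Op T1 Op1 qs T2 Op2)
  have s: "Op1 \<subseteq> Op \<union> {p. fst p = h}" using kstep_cases[OF krun_Cons(1)] by auto
  show ?case using s krun_Cons.IH by auto
qed

lemma krun_append:
  "krun K fz zc xr (xs @ ys) T Op T2 Op2 \<Longrightarrow>
   \<exists>T1 Op1. krun K fz zc xr xs T Op T1 Op1 \<and> krun K fz zc xr ys T1 Op1 T2 Op2"
proof (induction xs arbitrary: T Op)
  case Nil then show ?case by (auto intro: krun.intros)
next
  case (Cons a xs)
  from Cons.prems obtain h j T1 Op1 where a: "a = (h, j)" and s: "kstep K fz zc xr h j T Op T1 Op1"
    and r: "krun K fz zc xr (xs @ ys) T1 Op1 T2 Op2"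
    by (cases rule: krun.cases) auto
  from Cons.IH[OF r] obtain T3 Op3 where "krun K fz zc xr xs T1 Op1 T3 Op3" "krun K fz zc xr ys T3 Op3 T2 Op2"
    by blast
  then show ?case using a s by (auto intro: krun.intros)
qed

lemma count_lemma:
  assumes run: "krun K fz zc xr xs T Op T' Op'"
    and lv: "\<forall>s\<in>set xs. fst s = h \<and> j \<le> snd s"
    and tb: "TB K T" and fl: "(h, ist, j) \<in> T" and no: "(h, ist) \<notin> Op"
    and nin: "(Suc h, K * ist + l, j) \<notin> T'" and l: "l < K"
    and bad: "\<And>i. i < K ^ h \<Longrightarrow> kval fz zc xr h ist j \<le> kval fz zc xr h i j \<Longrightarrow> i \<in> Bad"
    and fin: "finite Bad"
  shows "card {i\<in>Bad. (h, i) \<in> Op} + length (filter (\<lambda>s. snd s = j) xs) \<le> card {i\<in>Bad. (h, i) \<in> Op'}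
         \<and> (h, ist) \<notin> Op'"
  using run lv tb fl no nin
proof (induction rule: krun.induct)
  case (krun_Nil T Op) then show ?case by simp
next
  case (krun_Cons h' j' T Op T1 Op1 qs T2 Op2)
  have hh: "h' = h" "j \<le> j'" using krun_Cons.prems(1) by auto
  have T12: "T1 \<subseteq> T2" using krun_mono[OF krun_Cons(2)] by blast
  have tb1: "TB K T1" using kstep_TB[OF krun_Cons(1) krun_Cons.prems(2)] .
  have fl1: "(h, ist, j) \<in> T1" using kstep_cases[OF krun_Cons(1)] krun_Cons.prems(3) by blast
  have no1: "(h, ist) \<notin> Op1"
  proof
    assume "(h, ist) \<in> Op1"
    with kstep_cases[OF krun_Cons(1)] krun_Cons.prems(4) hh obtain i where
      "i = ist" "T1 = T \<union> open_flags K h i j'" by auto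
    then have "(Suc h, K * ist + l, j) \<in> T1" using hh l by (auto simp: open_flags_def)
    then show False using T12 krun_Cons.prems(5) by blast
  qed
  have IH: "card {i\<in>Bad. (h, i) \<in> Op1} + length (filter (\<lambda>s. snd s = j) qs) \<le> card {i\<in>Bad. (h, i) \<in> Op2}
         \<and> (h, ist) \<notin> Op2"
    using krun_Cons.IH krun_Cons.prems(1) tb1 fl1 no1 krun_Cons.prems(5) by simp
  have sub: "{i\<in>Bad. (h, i) \<in> Op} \<subseteq> {i\<in>Bad. (h, i) \<in> Op1}"
    using kstep_cases[OF krun_Cons(1)] by blast
  have fin1: "finite {i\<in>Bad. (h, i) \<in> Op1}" using fin by simp
  have step: "card {i\<in>Bad. (h, i) \<in> Op} + (if j' = j then 1 else 0) \<le> card {i\<in>Bad. (h, i) \<in> Op1}"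
  proof (cases "j' = j")
    case True
    from kstep_nonempty[OF krun_Cons(1)[unfolded hh(1) True] krun_Cons.prems(3,4)] obtain i where
      i: "(h, i, j) \<in> T" "(h, i) \<notin> Op" "kval fz zc xr h ist j \<le> kval fz zc xr h i j"
         "Op1 = insert (h, i) Op" by blast
    have "i < K ^ h" using krun_Cons.prems(2) i(1) unfolding TB_def by blast
    then have iB: "i \<in> Bad" using bad i(3) by blast
    have "{i\<in>Bad. (h, i) \<in> Op1} = insert i {i\<in>Bad. (h, i) \<in> Op}" using i(4) iB by auto
    moreover have "i \<notin> {i\<in>Bad. (h, i) \<in> Op}" using i(2) by simp
    ultimately show ?thesis using True fin by simp
  next
    case False
    then show ?thesis using card_mono[OF fin1 sub] by simp
  qed
  have len: "length (filter (\<lambda>s. snd s = j) ((h', j') # qs)) = (if j' = j then 1 else 0) + length (filter (\<lambda>s. snd s = j) qs)"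
    by simp
  have c: "card {i\<in>Bad. (h, i) \<in> Op} + length (filter (\<lambda>s. snd s = j) ((h', j') # qs)) \<le> card {i\<in>Bad. (h, i) \<in> Op2}"
    unfolding len using IH step by linarith
  show ?case by (rule conjI[OF c conjunct2[OF IH]])
qed




lemma upt_split: "i \<le> j \<Longrightarrow> j \<le> k \<Longrightarrow> [i..<k] = [i..<j] @ [j..<k]"
  using upt_add_eq_append[of i j "k - j"] by simp

lemma block_lemma:
  fixes L h j :: nat and B :: real
  assumes run: "krun K fz zc xr (map (\<lambda>m. (h, nat \<lfloor>ln (real L / real (h * m))\<rfloor>)) [1..<L div h + 1]) T Op T1 Op1"
    and tb: "TB K T" and flag: "(h, ist, j) \<in> T" and notop: "(h, ist) \<notin> Op" and l: "l < K"
    and badI: "\<And>i. i < K ^ h \<Longrightarrow> kval fz zc xr h ist j \<le> kval fz zc xr h i j \<Longrightarrow> i \<in> Bad"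
    and finB: "finite Bad" and istB: "ist \<in> Bad"
    and cardB: "real (card Bad) \<le> B" and B1: "1 \<le> B" and big: "4 * B \<le> real L / (real h * exp (real j))"
    and h1: "1 \<le> h"
  shows "(Suc h, K * ist + l, j) \<in> T1"
proof (rule ccontr)
  assume nin: "(Suc h, K * ist + l, j) \<notin> T1"
  define a where "a = real L / (real h * exp (real j))"
  define M where "M = nat \<lfloor>a\<rfloor>"
  define M' where "M' = nat \<lfloor>a / exp 1\<rfloor>"
  define F where "F = (\<lambda>m::nat. (h, nat \<lfloor>ln (real L / real (h * m))\<rfloor>))"
  have e2: "2 \<le> exp (1::real)" using exp_ge_add_one_self[of 1] by simp
  have ej: "1 \<le> exp (real j)" by simp
  have a_pos: "a \<ge> 4" using big B1 unfolding a_def by linarith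
  have MM: "M' \<le> M" unfolding M_def M'_def
    using a_pos e2 by (intro nat_mono floor_mono) (simp add: divide_le_eq)
  have Ma: "real M \<le> a" "a - 1 < real M" unfolding M_def using a_pos by linarith+
  have M'a: "real M' \<le> a / exp 1" unfolding M'_def using a_pos e2 by (simp add: of_nat_floor)
  have aLh: "a \<le> real L / real h" unfolding a_def
    by (intro divide_left_mono) (use ej h1 in auto)
  have "a * real h \<le> real L" using aLh h1 by (simp add: le_divide_eq)
  then have "real M * real h \<le> real L" using Ma(1) mult_right_mono[OF Ma(1), of "real h"] by simp
  then have "M * h \<le> L" by (metis of_nat_le_iff of_nat_mult)
  then have MN: "M \<le> L div h" using h1 by (simp add: less_eq_div_iff_mult_less_eq)
  have split: "[1..<L div h + 1] = [1..<M+1] @ [M+1..<L div h + 1]"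
    using upt_split[of 1 "M+1" "L div h + 1"] MN by simp
  from run[folded F_def, unfolded split map_append] obtain T2 Op2 where
    r1: "krun K fz zc xr (map F [1..<M+1]) T Op T2 Op2" and
    r2: "krun K fz zc xr (map F [M+1..<L div h + 1]) T2 Op2 T1 Op1"
    using krun_append by blast
  have nin2: "(Suc h, K * ist + l, j) \<notin> T2" using krun_mono[OF r2] nin by blast
  have lv_ge: "j \<le> nat \<lfloor>ln (real L / real (h * m))\<rfloor>" if "1 \<le> m" "m \<le> M" for m
  proof -
    have "real m \<le> a" using that Ma(1) by linarith
    then have "real m * (real h * exp (real j)) \<le> real L" unfolding a_def using h1
      by (simp add: le_divide_eq)
    then have "exp (real j) \<le> real L / real (h * m)" using that h1
      by (simp add: le_divide_eq mult_ac)
    then have "real j \<le> ln (real L / real (h * m))"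
      by (metis exp_gt_zero less_le_trans ln_exp ln_le_cancel_iff)
    then show ?thesis by linarith
  qed
  have Lpos: "real L > 0"
  proof (rule ccontr)
    assume "\<not> real L > 0"
    then have "real L = 0" by simp
    then show False using a_pos unfolding a_def by simp
  qed
  have lv_le: "nat \<lfloor>ln (real L / real (h * m))\<rfloor> \<le> j" if "M' < m" "m \<le> M" for m
  proof -
    have ae0: "0 \<le> \<lfloor>a / exp 1\<rfloor>" using a_pos by simp
    have "\<lfloor>a / exp 1\<rfloor> < int m" using that(1) ae0 unfolding M'_def by (simp add: nat_less_iff)
    then have "a / exp 1 < real m" by (simp add: floor_less_iff)
    then have "real L < real m * (real h * exp (real j) * exp 1)" unfolding a_def using h1
      by (simp add: divide_less_eq mult_ac)
    then have "real L / real (h * m) < exp (real j + 1)" using that h1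
      by (simp add: divide_less_eq mult_ac exp_add)
    moreover have "0 < real L / real (h * m)" using that h1 Lpos by simp
    ultimately have "ln (real L / real (h * m)) < real j + 1"
      by (metis ln_exp ln_less_cancel_iff exp_gt_zero)
    then show ?thesis by linarith
  qed
  have lv: "\<forall>s\<in>set (map F [1..<M+1]). fst s = h \<and> j \<le> snd s"
    using lv_ge by (auto simp: F_def)
  have cl: "card {i\<in>Bad. (h, i) \<in> Op} + length (filter (\<lambda>s. snd s = j) (map F [1..<M+1])) \<le> card {i\<in>Bad. (h, i) \<in> Op2}
         \<and> (h, ist) \<notin> Op2"
    by (rule count_lemma[OF r1 lv tb flag notop nin2 l badI finB])
  have split2: "[1..<M+1] = [1..<M'+1] @ [M'+1..<M+1]"
    using upt_split[of 1 "M'+1" "M+1"] MM by simp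
  have allj: "filter (\<lambda>s. snd s = j) (map F [M'+1..<M+1]) = map F [M'+1..<M+1]"
  proof (rule filter_True, rule ballI)
    fix s assume "s \<in> set (map F [M'+1..<M+1])"
    then obtain m where "s = F m" "M' < m" "m \<le> M" by auto
    then show "snd s = j" using lv_ge[of m] lv_le[of m] by (simp add: F_def)
  qed
  have cnt: "M - M' \<le> length (filter (\<lambda>s. snd s = j) (map F [1..<M+1]))"
  proof -
    have "length (map F [M'+1..<M+1]) = M - M'" unfolding length_map length_upt by simp
    then show ?thesis unfolding split2 map_append filter_append allj length_append by linarith
  qed
  have "{i\<in>Bad. (h, i) \<in> Op2} \<subseteq> Bad - {ist}" using cl by auto
  then have "card {i\<in>Bad. (h, i) \<in> Op2} \<le> card (Bad - {ist})" using finB by (intro card_mono) auto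
  also have "\<dots> = card Bad - 1" using istB finB by simp
  finally have "M - M' \<le> card Bad - 1" using cnt cl by linarith
  moreover have "card Bad \<ge> 1" using istB finB card_gt_0_iff by (metis One_nat_def Suc_leI empty_iff)
  ultimately have "real (M - M') + 1 \<le> real (card Bad)" by linarith
  moreover have "real (M - M') = real M - real M'" using MM by simp
  moreover have "a / exp 1 \<le> a / 2" using e2 a_pos by (intro divide_left_mono) auto
  ultimately have "a - 1 - a / 2 + 1 < B" using Ma M'a cardB by linarith
  then show False using big B1 a_def by linarith
qed



primrec istar :: "nat \<Rightarrow> (nat \<Rightarrow> nat \<Rightarrow> 'x set) \<Rightarrow> 'x \<Rightarrow> nat \<Rightarrow> nat" where
  "istar K P xs 0 = 0"
| "istar K P xs (Suc h) = K * istar K P xs h + (SOME l. l < K \<and> xs \<in> P (Suc h) (K * istar K P xs h + l))"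

lemma istar_in:
  assumes part: "hier_partition K P xr"
  shows "istar K P xs h < K ^ h \<and> xs \<in> P h (istar K P xs h)"
proof (induction h)
  case 0
  then show ?case using part unfolding hier_partition_def by auto
next
  case (Suc h)
  define i where "i = istar K P xs h"
  have i: "i < K ^ h" "xs \<in> P h i" using Suc unfolding i_def by auto
  have "P h i = (\<Union>l<K. P (Suc h) (K * i + l))" using part i(1) unfolding hier_partition_def by blast
  then have ex: "\<exists>l. l < K \<and> xs \<in> P (Suc h) (K * i + l)" using i(2) by auto
  define l where "l = (SOME l. l < K \<and> xs \<in> P (Suc h) (K * i + l))"
  have l: "l < K \<and> xs \<in> P (Suc h) (K * i + l)" unfolding l_def by (rule someI_ex[OF ex])
  have eq: "istar K P xs (Suc h) = K * i + l" by (simp add: i_def l_def)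
  show ?case unfolding eq using l i(1) child_bound by blast
qed

lemma istar_Suc:
  assumes part: "hier_partition K P xr"
  shows "\<exists>l<K. istar K P xs (Suc h) = K * istar K P xs h + l"
proof -
  define i where "i = istar K P xs h"
  have i: "i < K ^ h" "xs \<in> P h i" using istar_in[OF part] unfolding i_def by auto
  have "P h i = (\<Union>l<K. P (Suc h) (K * i + l))" using part i(1) unfolding hier_partition_def by blast
  then have ex: "\<exists>l. l < K \<and> xs \<in> P (Suc h) (K * i + l)" using i(2) by auto
  define l where "l = (SOME l. l < K \<and> xs \<in> P (Suc h) (K * i + l))"
  have l: "l < K \<and> xs \<in> P (Suc h) (K * i + l)" unfolding l_def by (rule someI_ex[OF ex])
  have eq: "istar K P xs (Suc h) = K * i + l" by (simp add: i_def l_def)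
  show ?thesis using eq l i_def by blast
qed

theorem lemma7:
  fixes K :: nat and P :: "nat \<Rightarrow> nat \<Rightarrow> 'x set" and xr :: "nat \<Rightarrow> nat \<Rightarrow> 'x"
    and \<nu> \<rho> d C :: real and f :: "'x \<Rightarrow> real"
    and fz :: "real \<Rightarrow> 'x \<Rightarrow> real" and g :: "real \<Rightarrow> real \<Rightarrow> real"
    and \<zeta> :: "real \<Rightarrow> ereal" and lam :: "real \<Rightarrow> real" and zc :: "real \<Rightarrow> real"
    and \<Phi> \<Psi> :: "real \<Rightarrow> ereal"
    and \<Lambda> :: real and j :: nat and ht :: real and xout :: 'x
  assumes part: "hier_partition K P xr"
    and params: "\<nu> > 0" "0 < \<rho>" "\<rho> < 1" "d \<ge> 0" "C > 1"
    and fS: "in_S K P \<nu> \<rho> d C f"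
    and bias: "\<forall>z\<in>{0..1}. \<zeta> z \<ge> 0 \<and> strict_mono (g z) \<and>
                 (\<forall>x. ereal \<bar>f x - g z (fz z x)\<bar> \<le> \<zeta> z)"
    and fid: "\<forall>c\<ge>1. zc c \<in> {0..1} \<and> lam (zc c) \<le> c"
    and Phi: "\<forall>c\<ge>1. \<Phi> c = \<zeta> (zc c)"
    and Psi_mono: "\<forall>a b. 1 \<le> a \<longrightarrow> a \<le> b \<longrightarrow> \<Psi> b \<le> \<Psi> a"
    and Phi_Psi: "\<forall>c\<ge>1. \<Phi> c \<le> \<Psi> c"
    and budget: "\<Lambda> \<ge> 1"
    and ht_pos: "ht > 0"
    and cond1: "\<Psi> (exp (real j)) \<le> ereal (\<nu> * \<rho> powr ht)"
    and cond2: "real (lam_tilde K \<Lambda>) / (4 * ht * exp (real j)) \<ge> C * \<rho> powr (- d * ht)"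
    and run: "kometo_output K fz zc xr \<Lambda> xout"
  shows "ereal ((SUP x. f x) - f xout)
           \<le> ereal (3 * \<nu> / \<rho> * \<rho> powr ht) + 2 * \<Psi> (real (lam_tilde K \<Lambda>))"
proof -
  obtain xs where xs_max: "\<forall>x. f x \<le> f xs"
    and xs_loc: "\<forall>h. \<forall>i<K ^ h. xs \<in> P h i \<longrightarrow> (\<forall>x\<in>P h i. f x \<ge> f xs - \<nu> * \<rho> ^ h)"
    and xs_cnt: "\<forall>h. real (card {i. i < K ^ h \<and> (SUP x\<in>P h i. f x) \<ge> f xs - 3 * \<nu> * \<rho> ^ h})
               \<le> C * \<rho> powr (- d * real h)"
    using fS unfolding in_S_def by blast
  have P00: "P 0 0 = UNIV" using part unfolding hier_partition_def by blast
  have xrin: "\<And>h i. i < K ^ h \<Longrightarrow> xr h i \<in> P h i"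
    using part unfolding hier_partition_def by blast
  define L where "L = lam_tilde K \<Lambda>"
  define J where "J = jmax L"
  obtain T Op ch ci j0 where
    runT: "krun K fz zc xr (kschedule L) (open_flags K 0 0 J) {(0,0)} T Op" and
    chT: "\<forall>j\<le>J. (ch j, ci j, j) \<in> T \<and>
           (\<forall>h i. (h, i, j) \<in> T \<longrightarrow> kval fz zc xr h i j \<le> kval fz zc xr (ch j) (ci j) j)" and
    j0J: "j0 \<le> J" and
    outmax: "\<forall>j\<le>J. fz (zc (real L)) (xr (ch j) (ci j)) \<le> fz (zc (real L)) (xr (ch j0) (ci j0))" and
    xout_eq: "xout = xr (ch j0) (ci j0)"
    using run unfolding kometo_output_def Let_def L_def J_def by blast
  have pg1: "1 \<le> \<rho> powr (- d * x)" if "x \<ge> 0" for x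
    using powr_mono'[of "- d * x" 0 \<rho>] params that by (simp add: mult_nonneg_nonneg)
  have Cpp: "1 \<le> C * \<rho> powr (- d * ht)" using pg1[of ht] ht_pos params
    by (metis less_eq_real_def mult_le_cancel_right1 order.trans mult.commute)
  have LE: "4 * ht * exp (real j) * (C * \<rho> powr (- d * ht)) \<le> real L"
    using cond2 ht_pos unfolding L_def by (simp add: le_divide_eq mult_ac)
  have LE2: "4 * ht * exp (real j) \<le> real L"
    using LE Cpp ht_pos
    by (smt (verit) exp_gt_zero mult_le_cancel_left1 mult_pos_pos)
  have Lge1: "real L \<ge> 1"
  proof -
    have "0 < real L" using LE2 ht_pos by (smt (verit) exp_gt_zero mult_pos_pos)
    then show ?thesis by (metis of_nat_0_less_iff of_nat_1 of_nat_le_iff Suc_le_eq One_nat_def)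
  qed
  have supf: "(SUP x. f x) = f xs"
    by (rule cSup_eq_maximum) (use xs_max in auto)
  have loc0: "f xs - \<nu> \<le> f x" for x
    using xs_loc[rule_format, of 0 0 x] P00 by simp
  have key: "\<exists>j1. j1 \<le> J \<and> f xs - f (xr (ch j1) (ci j1)) \<le> 3 * \<nu> / \<rho> * \<rho> powr ht"
  proof (cases "j \<le> J")
    case False
    have lnL: "0 \<le> ln (real L)" using Lge1 by simp
    have "ln (real L) < real j" using False lnL unfolding J_def jmax_def by linarith
    then have "real L < exp (real j)" using Lge1
      by (metis exp_less_cancel_iff exp_ln less_le_trans zero_less_one)
    then have "4 * ht * exp (real j) < exp (real j)" using LE2 by linarith
    then have ht1: "ht \<le> 1" by simp
    have "\<rho> powr 1 \<le> \<rho> powr ht" using powr_mono'[of ht 1 \<rho>] ht1 params by simp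
    then have "\<rho> \<le> \<rho> powr ht" using params by simp
    then have "3 * \<nu> / \<rho> * \<rho> \<le> 3 * \<nu> / \<rho> * \<rho> powr ht" using params
      by (intro mult_left_mono) auto
    then have "3 * \<nu> \<le> 3 * \<nu> / \<rho> * \<rho> powr ht" using params by simp
    then have "f xs - f (xr (ch 0) (ci 0)) \<le> 3 * \<nu> / \<rho> * \<rho> powr ht"
      using loc0[of "xr (ch 0) (ci 0)"] params by linarith
    then show ?thesis by blast
  next
    case True
    define z where "z = zc (exp (real j))"
    define E where "E = \<nu> * \<rho> powr ht"
    have ej: "1 \<le> exp (real j)" by simp
    have z01: "z \<in> {0..1}" using fid ej unfolding z_def by blast
    have gmz: "strict_mono (g z)" and zbz: "\<forall>x. ereal \<bar>f x - g z (fz z x)\<bar> \<le> \<zeta> z"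
      using bias z01 by auto
    have zE: "\<zeta> z \<le> ereal E"
      using Phi Phi_Psi ej cond1 unfolding z_def E_def by (metis order.trans)
    have absE: "\<bar>f x - g z (fz z x)\<bar> \<le> E" for x
      using zbz zE order.trans by (metis ereal_less_eq(3))
    have kv: "kval fz zc xr h i j = fz z (xr h i)" for h i by (simp add: kval_def z_def)
    have cmp: "f x - 2 * E \<le> f y" if "fz z x \<le> fz z y" for x y
    proof -
      have "g z (fz z x) \<le> g z (fz z y)" using strict_mono_leD[OF gmz that] .
      then show ?thesis using absE[of x] absE[of y] by (simp add: abs_le_iff)
    qed
    define H where "H = nat \<lfloor>ht\<rfloor>"
    have H: "real H \<le> ht" "ht < real H + 1" using ht_pos unfolding H_def by linarith+
    have "ht \<le> 4 * ht * exp (real j)" using ht_pos ej by (smt (verit) mult_le_cancel_left1)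
    then have "real H \<le> real L" using H LE2 by linarith
    then have HL: "H \<le> L" by simp
    define ist where "ist = istar K P xs"
    have ist: "ist h < K ^ h \<and> xs \<in> P h (ist h)" for h unfolding ist_def by (rule istar_in[OF part])
    have istS: "\<exists>l<K. ist (Suc h) = K * ist h + l" for h unfolding ist_def by (rule istar_Suc[OF part])
    have ist0: "ist 0 = 0" unfolding ist_def by simp
    define Bad where "Bad h = {i. i < K ^ h \<and> (SUP x\<in>P h i. f x) \<ge> f xs - 3 * \<nu> * \<rho> ^ h}" for h
    have bdd: "bdd_above (f ` A)" for A using xs_max by (intro bdd_aboveI2) auto
    have Bad_props: "finite (Bad h) \<and> ist h \<in> Bad h \<and> real (card (Bad h)) \<le> C * \<rho> powr (- d * real h) \<and>
       (\<forall>i. i < K ^ h \<longrightarrow> kval fz zc xr h (ist h) j \<le> kval fz zc xr h i j \<longrightarrow> i \<in> Bad h)"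
      if "real h \<le> ht" for h
    proof (intro conjI allI impI)
      show "finite (Bad h)" unfolding Bad_def by (rule finite_subset[of _ "{..<K ^ h}"]) auto
      have rp: "0 \<le> \<nu> * \<rho> ^ h" using params by simp
      have "f xs \<le> (SUP x\<in>P h (ist h). f x)" using ist[of h] bdd by (intro cSUP_upper) auto
      then show "ist h \<in> Bad h" unfolding Bad_def using ist[of h] rp by auto
      show "real (card (Bad h)) \<le> C * \<rho> powr (- d * real h)" using xs_cnt unfolding Bad_def by blast
      fix i assume i: "i < K ^ h" and kle: "kval fz zc xr h (ist h) j \<le> kval fz zc xr h i j"
      have "f (xr h (ist h)) - 2 * E \<le> f (xr h i)" using cmp kle unfolding kv by blast
      moreover have "f xs - \<nu> * \<rho> ^ h \<le> f (xr h (ist h))" using xs_loc ist[of h] xrin by blast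
      moreover have "E \<le> \<nu> * \<rho> ^ h"
      proof -
        have "\<rho> powr ht \<le> \<rho> powr (real h)" using powr_mono'[of "real h" ht \<rho>] that params by simp
        then show ?thesis unfolding E_def using params by (simp add: powr_realpow)
      qed
      moreover have "f (xr h i) \<le> (SUP x\<in>P h i. f x)" using xrin[OF i] bdd by (intro cSUP_upper) auto
      ultimately show "i \<in> Bad h" unfolding Bad_def using i by auto
    qed
    have Bbig: "1 \<le> C * \<rho> powr (- d * real h) \<and> 4 * (C * \<rho> powr (- d * real h)) \<le> real L / (real h * exp (real j))"
      if "real h \<le> ht" "1 \<le> h" for h
    proof
      show "1 \<le> C * \<rho> powr (- d * real h)" using pg1[of "real h"] params
        by (metis less_eq_real_def mult_le_cancel_right1 order.trans mult.commute of_nat_0_le_iff)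
      have a: "\<rho> powr (- d * real h) \<le> \<rho> powr (- d * ht)"
        using powr_mono'[of "- d * ht" "- d * real h" \<rho>] that params by (simp add: mult_left_mono)
      have b: "4 * (C * \<rho> powr (- d * ht)) \<le> real L / (ht * exp (real j))"
        using cond2 ht_pos unfolding L_def by (simp add: le_divide_eq divide_le_eq mult_ac)
      have c: "real L / (ht * exp (real j)) \<le> real L / (real h * exp (real j))"
        using that by (intro divide_left_mono) auto
      show "4 * (C * \<rho> powr (- d * real h)) \<le> real L / (real h * exp (real j))"
        using a b c params by (smt (verit) mult_left_mono)
    qed
    define blk where "blk h = map (\<lambda>m. (h, nat \<lfloor>ln (real L / real (h * m))\<rfloor>)) [1..<L div h + 1]" for h
    have sched: "kschedule L = concat (map blk [1..<L+1])" unfolding kschedule_def blk_def by (rule refl)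
    have ind: "\<forall>T0 Op0. krun K fz zc xr (concat (map blk [k..<L+1])) T0 Op0 T Op \<longrightarrow> TB K T0 \<longrightarrow>
        Op0 \<subseteq> insert (0,0) {p. 1 \<le> fst p \<and> fst p < k} \<longrightarrow>
        (min k (Suc H), ist (min k (Suc H)), j) \<in> T0 \<longrightarrow> (Suc H, ist (Suc H), j) \<in> T"
      if k1: "1 \<le> k" and kL: "k \<le> L + 1" for k
      using kL
    proof (induction k rule: inc_induct)
      case base
      show ?case
      proof (intro allI impI)
        fix T0 Op0
        assume r: "krun K fz zc xr (concat (map blk [L + 1..<L+1])) T0 Op0 T Op"
          and fl: "(min (L + 1) (Suc H), ist (min (L + 1) (Suc H)), j) \<in> T0"
        have "T = T0" using r by (cases rule: krun.cases) auto
        moreover have "min (L + 1) (Suc H) = Suc H" using HL by simp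
        ultimately show "(Suc H, ist (Suc H), j) \<in> T" using fl by simp
      qed
    next
      case (step n)
      have n1: "1 \<le> n" using k1 step.hyps(1) by simp
      have nL: "n \<le> L" using step.hyps(2) by simp
      show ?case
      proof (intro allI impI)
        fix T0 Op0
        assume r: "krun K fz zc xr (concat (map blk [n..<L+1])) T0 Op0 T Op"
          and tb: "TB K T0" and op: "Op0 \<subseteq> insert (0,0) {p. 1 \<le> fst p \<and> fst p < n}"
          and fl: "(min n (Suc H), ist (min n (Suc H)), j) \<in> T0"
        have "[n..<L+1] = n # [Suc n..<L+1]" using nL by (simp add: upt_conv_Cons)
        then have r': "krun K fz zc xr (blk n @ concat (map blk [Suc n..<L+1])) T0 Op0 T Op" using r by simp
        obtain T1 Op1 where r1: "krun K fz zc xr (blk n) T0 Op0 T1 Op1"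
          and r2: "krun K fz zc xr (concat (map blk [Suc n..<L+1])) T1 Op1 T Op"
          using krun_append[OF r'] by blast
        have tb1: "TB K T1" using krun_TB[OF r1 tb] .
        have "fst ` set (blk n) \<subseteq> {n}" unfolding blk_def by auto
        then have op1: "Op1 \<subseteq> insert (0,0) {p. 1 \<le> fst p \<and> fst p < Suc n}"
          using krun_Op[OF r1] op n1 by fastforce
        have fl1: "(min (Suc n) (Suc H), ist (min (Suc n) (Suc H)), j) \<in> T1"
        proof (cases "n \<le> H")
          case True
          have mn: "min n (Suc H) = n" "min (Suc n) (Suc H) = Suc n" using True by auto
          have fln: "(n, ist n, j) \<in> T0" using fl mn by simp
          have nop: "(n, ist n) \<notin> Op0" using op n1 by auto
          obtain l where l: "l < K" "ist (Suc n) = K * ist n + l" using istS by blast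
          have nh: "real n \<le> ht" using True H by linarith
          from Bad_props[OF nh] have bp: "finite (Bad n)" "ist n \<in> Bad n"
            "real (card (Bad n)) \<le> C * \<rho> powr (- d * real n)"
            "\<And>i. i < K ^ n \<Longrightarrow> kval fz zc xr n (ist n) j \<le> kval fz zc xr n i j \<Longrightarrow> i \<in> Bad n"
            by blast+
          from Bbig[OF nh n1] have bb: "1 \<le> C * \<rho> powr (- d * real n)"
            "4 * (C * \<rho> powr (- d * real n)) \<le> real L / (real n * exp (real j))" by blast+
          have "(Suc n, K * ist n + l, j) \<in> T1"
            by (rule block_lemma[OF r1[unfolded blk_def] tb fln nop l(1) bp(4) bp(1) bp(2) bp(3) bb(1) bb(2) n1])
          then show ?thesis using mn l(2) by simp
        next
          case False
          have "min n (Suc H) = Suc H" "min (Suc n) (Suc H) = Suc H" using False by auto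
          then show ?thesis using fl krun_mono[OF r1] by auto
        qed
        show "(Suc H, ist (Suc H), j) \<in> T" using step.IH r2 tb1 op1 fl1 by blast
      qed
    qed
    have tb0: "TB K (open_flags K 0 0 J)" unfolding TB_def open_flags_def by auto
    obtain l0 where l0: "l0 < K" "ist 1 = l0" using istS[of 0] ist0 by auto
    have fl0: "(min 1 (Suc H), ist (min 1 (Suc H)), j) \<in> open_flags K 0 0 J"
      using l0 True unfolding open_flags_def by auto
    have finT: "(Suc H, ist (Suc H), j) \<in> T"
      using ind[of 1] runT[unfolded sched] tb0 fl0 HL by auto
    have kle: "kval fz zc xr (Suc H) (ist (Suc H)) j \<le> kval fz zc xr (ch j) (ci j) j"
      using chT True finT by blast
    have f1: "f (xr (Suc H) (ist (Suc H))) - 2 * E \<le> f (xr (ch j) (ci j))"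
      using cmp kle unfolding kv by blast
    have f2: "f xs - \<nu> * \<rho> ^ Suc H \<le> f (xr (Suc H) (ist (Suc H)))"
      using xs_loc ist[of "Suc H"] xrin by blast
    have "\<rho> powr (real (Suc H)) \<le> \<rho> powr ht" using powr_mono'[of ht "real (Suc H)" \<rho>] H params by simp
    then have f3: "\<nu> * \<rho> ^ Suc H \<le> E" unfolding E_def using params
      by (simp add: powr_realpow del: of_nat_Suc)
    have f4: "3 * E \<le> 3 * \<nu> / \<rho> * \<rho> powr ht"
    proof -
      have "3 * E = 3 * \<nu> * \<rho> powr ht" unfolding E_def by simp
      also have "\<dots> \<le> 3 * \<nu> * \<rho> powr ht / \<rho>" using params
        by (simp add: le_divide_eq)
      finally show ?thesis by simp
    qed
    have "f xs - f (xr (ch j) (ci j)) \<le> 3 * \<nu> / \<rho> * \<rho> powr ht" using f1 f2 f3 f4 by linarith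
    then show ?thesis using True by blast
  qed
  then obtain j1 where j1J: "j1 \<le> J" and j1b: "f xs - f (xr (ch j1) (ci j1)) \<le> 3 * \<nu> / \<rho> * \<rho> powr ht"
    by blast
  define z' where "z' = zc (real L)"
  have z'01: "z' \<in> {0..1}" using fid Lge1 unfolding z'_def by blast
  have zeta0: "\<zeta> z' \<ge> 0" and gm: "strict_mono (g z')"
    and zb: "\<forall>x. ereal \<bar>f x - g z' (fz z' x)\<bar> \<le> \<zeta> z'" using bias z'01 by auto
  have zPsi: "\<zeta> z' \<le> \<Psi> (real L)" using Phi Phi_Psi Lge1 unfolding z'_def by metis
  have fzc: "fz z' (xr (ch j1) (ci j1)) \<le> fz z' xout" using outmax j1J xout_eq unfolding z'_def by simp
  define A where "A = 3 * \<nu> / \<rho> * \<rho> powr ht"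
  have fin: "ereal (f xs - f xout) \<le> ereal A + 2 * \<Psi> (real L)"
  proof (cases "\<zeta> z'")
    case (real r)
    have ab: "\<bar>f x - g z' (fz z' x)\<bar> \<le> r" for x using zb real by auto
    have "g z' (fz z' (xr (ch j1) (ci j1))) \<le> g z' (fz z' xout)" using strict_mono_leD[OF gm fzc] .
    then have "f (xr (ch j1) (ci j1)) - 2 * r \<le> f xout"
      using ab[of "xr (ch j1) (ci j1)"] ab[of xout] by (simp add: abs_le_iff)
    then have r1: "f xs - f xout \<le> A + 2 * r" using j1b unfolding A_def by linarith
    have rP: "ereal r \<le> \<Psi> (real L)" using zPsi real by simp
    show ?thesis
    proof (cases "\<Psi> (real L)")
      case (real p)
      then show ?thesis using rP r1 by simp
    next
      case PInf
      then show ?thesis by simp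
    next
      case MInf
      then show ?thesis using rP by simp
    qed
  next
    case PInf
    then have "\<Psi> (real L) = \<infinity>" using zPsi by simp
    then show ?thesis by simp
  next
    case MInf
    then show ?thesis using zeta0 by simp
  qed
  then show ?thesis by (simp only: supf A_def L_def)
qed


end
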